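(* Let $\mathfrak l$ be a real finite-dimensional nilpotent Lie algebra with $\dim\mathfrak l'=2$ and $\mathfrak l'\subset\mathfrak z(\mathfrak l)$, let $\bar{\mathfrak l}\subset\mathfrak l$ be a 3-dimensional subspace with $[\bar{\mathfrak l},\bar{\mathfrak l}]=\mathfrak l'$, let $\mathfrak a$ be a semisimple orthogonal $\mathfrak l$-module and let $[\alpha,\gamma]\in\mathcal H^2_Q(\mathfrak l,\mathfrak a)$ be admissible, represented with $\alpha(\mathfrak l,\mathfrak l)\subset\mathfrak a^{\mathfrak l}$. Then $\alpha([L,\mathfrak l],\mathfrak l)=0$ for all $L\in\mathfrak l$ satisfying $[L,\bar{\mathfrak l}]=0$.
   Context: For a Lie algebra $\mathfrak l$: $\mathfrak l^1=\mathfrak l$, $\mathfrak l^{k+1}=[\mathfrak l,\mathfrak l^k]$, $\mathfrak l'=\mathfrak l^2$, $\mathfrak z(\mathfrak l)$ the centre. An orthogonal $\mathfrak l$-module $(\rho,\mathfrak a)$ is a finite-dimensional real vector space with a nondegenerate symmetric bilinear form $\langle\cdot,\cdot\rangle_{\mathfrak a}$ and a representation by skew-adjoint maps; $\mathfrak a^{\mathfrak l}$ its invariants. $C^p(\mathfrak l,\mathfrak a)$: alternating $p$-linear maps with Chevalley–Eilenberg differential $d$; $C^p(\mathfrak l)=C^p(\mathfrak l,\mathbb R)$; $\langle\alpha\wedge\beta\rangle$ is the wedge product followed by contraction with $\langle\cdot,\cdot\rangle_{\mathfrak a}$. $\mathcal Z^2_Q(\mathfrak l,\mathfrak a)=\{(\alpha,\gamma)\in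 C^2(\mathfrak l,\mathfrak a)\oplus C^3(\mathfrak l): d\alpha=0,d\gamma=\frac12\langle\alpha\wedge\alpha\rangle\}$; the group $C^1(\mathfrak l,\mathfrak a)\oplus C^2(\mathfrak l)$ with $(\tau_1,\sigma_1)*(\tau_2,\sigma_2)=(\tau_1+\tau_2,\sigma_1+\sigma_2+\frac12\langle\tau_1\wedge\tau_2\rangle)$ acts by $(\alpha,\gamma)(\tau,\sigma)=(\alpha+d\tau,\gamma+d\sigma+\langle(\alpha+\frac12d\tau)\wedge\tau\rangle)$; $\mathcal H^2_Q(\mathfrak l,\mathfrak a)$ is the orbit set. Admissibility: with $\mathfrak l^{m+2}=0$, $\mathfrak l_{(0)}=\mathfrak z(\mathfrak l)\cap\ker\rho$, $\mathfrak l_{(k)}=\mathfrak z(\mathfrak l)\cap\mathfrak l^{k+1}$ ($k\ge1$), and a representative with $\alpha(\mathfrak l,\mathfrak l)\subset\mathfrak a^{\mathfrak l}$, the class is admissible iff for all $0\le k\le m$: $(A_k)$ whenever $L_0\in\mathfrak l_{(k)}$ and there are $A_0\in\mathfrak a$, $Z_0\in(\mathfrak l^{k+1})^*$ with $\alpha(L,L_0)=0$ and $\gamma(L,L_0,\cdot)=-\langle A_0,\alpha(L,\cdot)\rangle_{\mathfrak a}+\langle Z_0,[L,\cdot]\rangle$ on $\mathfrak l^{k+1}$ for all $L$, then $L_0=0$; $(B_k)$ $\alpha$ applied to the kernel of the bracket map $\mathfrak l\otimes\mathfrak l^{k+1}\to\mathfrak l$ is a nondegenerate subspace of $\mathfrak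 a$. *)

theory Defs
  imports "HOL-Analysis.Analysis"
begin

(* Finite-dimensional real vector spaces are modelled by types of class euclidean_space
   (the inner product of the class plays no role). *)

definition trilinear :: "('a::real_vector \<Rightarrow> 'a \<Rightarrow> 'a \<Rightarrow> 'b::real_vector) \<Rightarrow> bool" where
  "trilinear f \<longleftrightarrow> (\<forall>y z. linear (\<lambda>x. f x y z)) \<and> (\<forall>x z. linear (\<lambda>y. f x y z))
                    \<and> (\<forall>x y. linear (\<lambda>z. f x y z))"

definition lie_algebra :: "('l::real_vector \<Rightarrow> 'l \<Rightarrow> 'l) \<Rightarrow> bool" where
  "lie_algebra br \<longleftrightarrow> bilinear br \<and> (\<forall>x. br x x = 0) \<and>
     (\<forall>x y z. br x (br y z) + br y (br z x) + br z (br x y) = 0)"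

definition brset :: "('l::real_vector \<Rightarrow> 'l \<Rightarrow> 'l) \<Rightarrow> 'l set \<Rightarrow> 'l set \<Rightarrow> 'l set" where
  "brset br A B = span {br x y | x y. x \<in> A \<and> y \<in> B}"

(* lower central series, shifted: lcs br k = l^(k+1); so lcs 0 = l, lcs 1 = l' *)
fun lcs :: "('l::real_vector \<Rightarrow> 'l \<Rightarrow> 'l) \<Rightarrow> nat \<Rightarrow> 'l set" where
  "lcs br 0 = UNIV"
| "lcs br (Suc k) = brset br UNIV (lcs br k)"

definition nilpotent_lie :: "('l::real_vector \<Rightarrow> 'l \<Rightarrow> 'l) \<Rightarrow> bool" where
  "nilpotent_lie br \<longleftrightarrow> (\<exists>m. lcs br m = {0})"

definition centre :: "('l::real_vector \<Rightarrow> 'l \<Rightarrow> 'l) \<Rightarrow> 'l set" where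
  "centre br = {z. \<forall>x. br z x = 0}"

definition orthogonal_module ::
  "('l::real_vector \<Rightarrow> 'l \<Rightarrow> 'l) \<Rightarrow> ('l \<Rightarrow> 'a::real_vector \<Rightarrow> 'a) \<Rightarrow> ('a \<Rightarrow> 'a \<Rightarrow> real) \<Rightarrow> bool" where
  "orthogonal_module br rho B \<longleftrightarrow>
     bilinear B \<and> (\<forall>u v. B u v = B v u) \<and> (\<forall>u. (\<forall>v. B u v = 0) \<longrightarrow> u = 0) \<and>
     bilinear rho \<and>
     (\<forall>x y v. rho (br x y) v = rho x (rho y v) - rho y (rho x v)) \<and>
     (\<forall>x u v. B (rho x u) v = - B u (rho x v))"

definition invariant_subspace :: "('l \<Rightarrow> 'a::real_vector \<Rightarrow> 'a) \<Rightarrow> 'a set \<Rightarrow> bool" where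
  "invariant_subspace rho U \<longleftrightarrow> subspace U \<and> (\<forall>x. \<forall>u\<in>U. rho x u \<in> U)"

definition semisimple_module :: "('l \<Rightarrow> 'a::real_vector \<Rightarrow> 'a) \<Rightarrow> bool" where
  "semisimple_module rho \<longleftrightarrow> (\<forall>U. invariant_subspace rho U \<longrightarrow>
     (\<exists>V. invariant_subspace rho V \<and> U \<inter> V = {0} \<and> U + V = UNIV))"

definition invariants :: "('l \<Rightarrow> 'a::real_vector \<Rightarrow> 'a) \<Rightarrow> 'a set" where
  "invariants rho = {v. \<forall>x. rho x v = 0}"

definition cochain2 :: "('l::real_vector \<Rightarrow> 'l \<Rightarrow> 'a::real_vector) \<Rightarrow> bool" where
  "cochain2 \<alpha> \<longleftrightarrow> bilinear \<alpha> \<and> (\<forall>x. \<alpha> x x = 0)"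

definition cochain3 :: "('l::real_vector \<Rightarrow> 'l \<Rightarrow> 'l \<Rightarrow> real) \<Rightarrow> bool" where
  "cochain3 \<gamma> \<longleftrightarrow> trilinear \<gamma> \<and> (\<forall>x z. \<gamma> x x z = 0) \<and> (\<forall>x y. \<gamma> x y y = 0)"

definition d2 :: "('l::real_vector \<Rightarrow> 'l \<Rightarrow> 'l) \<Rightarrow> ('l \<Rightarrow> 'a::real_vector \<Rightarrow> 'a)
                   \<Rightarrow> ('l \<Rightarrow> 'l \<Rightarrow> 'a) \<Rightarrow> 'l \<Rightarrow> 'l \<Rightarrow> 'l \<Rightarrow> 'a" where
  "d2 br rho \<alpha> x0 x1 x2 =
     rho x0 (\<alpha> x1 x2) - rho x1 (\<alpha> x0 x2) + rho x2 (\<alpha> x0 x1)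
     - \<alpha> (br x0 x1) x2 + \<alpha> (br x0 x2) x1 - \<alpha> (br x1 x2) x0"

definition d3 :: "('l::real_vector \<Rightarrow> 'l \<Rightarrow> 'l) \<Rightarrow> ('l \<Rightarrow> 'l \<Rightarrow> 'l \<Rightarrow> real)
                   \<Rightarrow> 'l \<Rightarrow> 'l \<Rightarrow> 'l \<Rightarrow> 'l \<Rightarrow> real" where
  "d3 br \<gamma> x0 x1 x2 x3 =
       \<gamma> (br x0 x1) x2 x3 - \<gamma> (br x0 x2) x1 x3 + \<gamma> (br x0 x3) x1 x2
     + \<gamma> (br x1 x2) x0 x3 - \<gamma> (br x1 x3) x0 x2 + \<gamma> (br x2 x3) x0 x1"

(* <alpha /\ beta> for 2-forms: sum over (2,2)-shuffles *)
definition wedge22 :: "('a \<Rightarrow> 'a \<Rightarrow> real) \<Rightarrow> ('l \<Rightarrow> 'l \<Rightarrow> 'a) \<Rightarrow> ('l \<Rightarrow> 'l \<Rightarrow> 'a)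
                        \<Rightarrow> 'l \<Rightarrow> 'l \<Rightarrow> 'l \<Rightarrow> 'l \<Rightarrow> real" where
  "wedge22 B \<alpha> \<beta> x1 x2 x3 x4 =
       B (\<alpha> x1 x2) (\<beta> x3 x4) - B (\<alpha> x1 x3) (\<beta> x2 x4) + B (\<alpha> x1 x4) (\<beta> x2 x3)
     + B (\<alpha> x2 x3) (\<beta> x1 x4) - B (\<alpha> x2 x4) (\<beta> x1 x3) + B (\<alpha> x3 x4) (\<beta> x1 x2)"

definition quad_cocycle ::
  "('l::real_vector \<Rightarrow> 'l \<Rightarrow> 'l) \<Rightarrow> ('l \<Rightarrow> 'a::real_vector \<Rightarrow> 'a) \<Rightarrow> ('a \<Rightarrow> 'a \<Rightarrow> real)
   \<Rightarrow> ('l \<Rightarrow> 'l \<Rightarrow> 'a) \<Rightarrow> ('l \<Rightarrow> 'l \<Rightarrow> 'l \<Rightarrow> real) \<Rightarrow> bool" where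
  "quad_cocycle br rho B \<alpha> \<gamma> \<longleftrightarrow> cochain2 \<alpha> \<and> cochain3 \<gamma> \<and>
     (\<forall>x0 x1 x2. d2 br rho \<alpha> x0 x1 x2 = 0) \<and>
     (\<forall>x0 x1 x2 x3. d3 br \<gamma> x0 x1 x2 x3 = (1/2) * wedge22 B \<alpha> \<alpha> x0 x1 x2 x3)"

definition lsub :: "('l::real_vector \<Rightarrow> 'l \<Rightarrow> 'l) \<Rightarrow> ('l \<Rightarrow> 'a::real_vector \<Rightarrow> 'a) \<Rightarrow> nat \<Rightarrow> 'l set" where
  "lsub br rho k = (if k = 0 then centre br \<inter> {x. rho x = (\<lambda>v. 0)} else centre br \<inter> lcs br k)"

(* condition (A_k); Z0 \<in> (l^(k+1))^* is represented by a linear functional on l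
   (only its restriction to l^(k+1) = lcs br k matters) *)
definition condA ::
  "('l::real_vector \<Rightarrow> 'l \<Rightarrow> 'l) \<Rightarrow> ('l \<Rightarrow> 'a::real_vector \<Rightarrow> 'a) \<Rightarrow> ('a \<Rightarrow> 'a \<Rightarrow> real)
   \<Rightarrow> ('l \<Rightarrow> 'l \<Rightarrow> 'a) \<Rightarrow> ('l \<Rightarrow> 'l \<Rightarrow> 'l \<Rightarrow> real) \<Rightarrow> nat \<Rightarrow> bool" where
  "condA br rho B \<alpha> \<gamma> k \<longleftrightarrow> (\<forall>L0 \<in> lsub br rho k.
     (\<exists>A0 :: 'a. \<exists>Z0 :: 'l \<Rightarrow> real. linear Z0 \<and>
        (\<forall>L. \<alpha> L L0 = 0 \<and>
             (\<forall>X \<in> lcs br k. \<gamma> L L0 X = - B A0 (\<alpha> L X) + Z0 (br L X))))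
     \<longrightarrow> L0 = 0)"

(* image under alpha of the kernel of the bracket map l \<otimes> l^(k+1) \<rightarrow> l;
   elements of l \<otimes> l^(k+1) are written as finite sums of pure tensors *)
definition alpha_ker ::
  "('l::real_vector \<Rightarrow> 'l \<Rightarrow> 'l) \<Rightarrow> ('l \<Rightarrow> 'l \<Rightarrow> 'a::real_vector) \<Rightarrow> nat \<Rightarrow> 'a set" where
  "alpha_ker br \<alpha> k = {(\<Sum>i<n. \<alpha> (x i) (y i)) | (n::nat) x y.
       (\<forall>i<n. y i \<in> lcs br k) \<and> (\<Sum>i<n. br (x i) (y i)) = 0}"

definition nondegenerate_subspace :: "('a::real_vector \<Rightarrow> 'a \<Rightarrow> real) \<Rightarrow> 'a set \<Rightarrow> bool" where
  "nondegenerate_subspace B W \<longleftrightarrow> (\<forall>w\<in>W. (\<forall>v\<in>W. B w v = 0) \<longrightarrow> w = 0)"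

definition condB ::
  "('l::real_vector \<Rightarrow> 'l \<Rightarrow> 'l) \<Rightarrow> ('a::real_vector \<Rightarrow> 'a \<Rightarrow> real) \<Rightarrow> ('l \<Rightarrow> 'l \<Rightarrow> 'a) \<Rightarrow> nat \<Rightarrow> bool" where
  "condB br B \<alpha> k \<longleftrightarrow> nondegenerate_subspace B (alpha_ker br \<alpha> k)"

(* admissibility, evaluated on a representative (alpha, gamma) with alpha(l,l) \<subseteq> a^l,
   for all 0 \<le> k \<le> m where l^(m+2) = 0 *)
definition admissible ::
  "('l::real_vector \<Rightarrow> 'l \<Rightarrow> 'l) \<Rightarrow> ('l \<Rightarrow> 'a::real_vector \<Rightarrow> 'a) \<Rightarrow> ('a \<Rightarrow> 'a \<Rightarrow> real)
   \<Rightarrow> ('l \<Rightarrow> 'l \<Rightarrow> 'a) \<Rightarrow> ('l \<Rightarrow> 'l \<Rightarrow> 'l \<Rightarrow> real) \<Rightarrow> bool" where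
  "admissible br rho B \<alpha> \<gamma> \<longleftrightarrow> (\<forall>m. lcs br (Suc m) = {0} \<longrightarrow>
     (\<forall>k\<le>m. condA br rho B \<alpha> \<gamma> k \<and> condB br B \<alpha> k))"

end

theory Submission
  imports Defs
begin

lemma span_gen_zero:
  assumes "linear f" "x \<in> span {g a b | a b. P a b}" "\<And>a b. P a b \<Longrightarrow> f (g a b) = 0"
  shows "f x = 0"
  using linear_eq_0_on_span[OF assms(1) _ assms(2)] assms(3) by blast

lemma lin_comp_B:
  assumes "bilinear B" "bilinear al"
  shows "linear (\<lambda>U. B w (al W U))" "linear (\<lambda>V. al V Z)"
proof -
  have "linear (\<lambda>U. al W U)" using assms(2) by (simp add: bilinear_def)
  moreover have "linear (\<lambda>v. B w v)" using assms(1) by (simp add: bilinear_def)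
  ultimately show "linear (\<lambda>U. B w (al W U))" using linear_compose[of "\<lambda>U. al W U" "\<lambda>v. B w v"]
    by (simp add: o_def)
  show "linear (\<lambda>V. al V Z)" using assms(2) by (simp add: bilinear_def)
qed

lemma bil_antisym:
  assumes "bilinear h" "\<forall>x. h x x = 0"
  shows "h x y = - h y x"
proof -
  have "h (x+y) (x+y) = 0" using assms by blast
  then have "h x x + h x y + h y x + h y y = 0"
    using assms(1) by (simp add: bilinear_ladd bilinear_radd algebra_simps)
  then show ?thesis using assms(2) by (simp add: eq_neg_iff_add_eq_0)
qed

theorem lemma5:
  fixes br :: "'l::euclidean_space \<Rightarrow> 'l \<Rightarrow> 'l"
    and rho :: "'l \<Rightarrow> 'a::euclidean_space \<Rightarrow> 'a"
    and B :: "'a \<Rightarrow> 'a \<Rightarrow> real"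
    and \<alpha> :: "'l \<Rightarrow> 'l \<Rightarrow> 'a"
    and \<gamma> :: "'l \<Rightarrow> 'l \<Rightarrow> 'l \<Rightarrow> real"
    and lbar :: "'l set"
  assumes lie: "lie_algebra br"
    and nil: "nilpotent_lie br"
    and dimder: "dim (lcs br 1) = 2"
    and dercent: "lcs br 1 \<subseteq> centre br"
    and lbar_sub: "subspace lbar"
    and lbar_dim: "dim lbar = 3"
    and lbar_br: "brset br lbar lbar = lcs br 1"
    and orth: "orthogonal_module br rho B"
    and ss: "semisimple_module rho"
    and cocyc: "quad_cocycle br rho B \<alpha> \<gamma>"
    and inv: "\<forall>x y. \<alpha> x y \<in> invariants rho"
    and adm: "admissible br rho B \<alpha> \<gamma>"
  shows "\<forall>L. (\<forall>X\<in>lbar. br L X = 0) \<longrightarrow> (\<forall>X Y. \<alpha> (br L X) Y = 0)"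
proof (rule allI, rule impI)
  fix L assume hL: "\<forall>X\<in>lbar. br L X = 0"
  have brb: "bilinear br" and brxx: "\<forall>x. br x x = 0"
    using lie unfolding lie_algebra_def by auto
  have bra: "\<And>x y. br x y = - br y x" using bil_antisym[OF brb brxx] .
  have Bb: "bilinear B" and Bs: "\<And>u v. B u v = B v u"
    using orth unfolding orthogonal_module_def by auto
  have ab: "bilinear \<alpha>" and axx: "\<forall>x. \<alpha> x x = 0"
    using cocyc unfolding quad_cocycle_def cochain2_def by auto
  have aa: "\<And>x y. \<alpha> x y = - \<alpha> y x" using bil_antisym[OF ab axx] .
  have gt: "trilinear \<gamma>" and gxx: "\<And>x z. \<gamma> x x z = 0"
    using cocyc unfolding quad_cocycle_def cochain3_def by auto
  have g1: "\<And>y z. linear (\<lambda>x. \<gamma> x y z)" using gt unfolding trilinear_def by auto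
  have g2: "\<And>x z. linear (\<lambda>y. \<gamma> x y z)" using gt unfolding trilinear_def by auto
  have g0: "\<And>y z. \<gamma> 0 y z = 0" using g1 linear_0 by fastforce
  have ga: "\<And>x y z. \<gamma> x y z = - \<gamma> y x z"
  proof -
    fix x y z
    have "bilinear (\<lambda>x y. \<gamma> x y z)" using g1 g2 unfolding bilinear_def by auto
    moreover have "\<forall>x. \<gamma> x x z = 0" using gxx by blast
    ultimately show "\<gamma> x y z = - \<gamma> y x z" by (rule bil_antisym)
  qed
  have a0: "\<And>y. \<alpha> 0 y = 0" using ab bilinear_lzero by blast
  have rho0: "\<And>x y z. rho x (\<alpha> y z) = 0" using inv unfolding invariants_def by auto
  have d2z: "\<And>x0 x1 x2. \<alpha> (br x0 x1) x2 - \<alpha> (br x0 x2) x1 + \<alpha> (br x1 x2) x0 = 0"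
  proof -
    fix x0 x1 x2
    have "d2 br rho \<alpha> x0 x1 x2 = 0" using cocyc unfolding quad_cocycle_def by auto
    then show "\<alpha> (br x0 x1) x2 - \<alpha> (br x0 x2) x1 + \<alpha> (br x1 x2) x0 = 0"
      unfolding d2_def rho0 by (simp add: algebra_simps)
  qed
  have d3e: "\<And>x0 x1 x2 x3. d3 br \<gamma> x0 x1 x2 x3 =
      B (\<alpha> x0 x1) (\<alpha> x2 x3) - B (\<alpha> x0 x2) (\<alpha> x1 x3) + B (\<alpha> x0 x3) (\<alpha> x1 x2)"
  proof -
    fix x0 x1 x2 x3
    have "d3 br \<gamma> x0 x1 x2 x3 = (1/2) * wedge22 B \<alpha> \<alpha> x0 x1 x2 x3"
      using cocyc unfolding quad_cocycle_def by auto
    then show "d3 br \<gamma> x0 x1 x2 x3 =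
      B (\<alpha> x0 x1) (\<alpha> x2 x3) - B (\<alpha> x0 x2) (\<alpha> x1 x3) + B (\<alpha> x0 x3) (\<alpha> x1 x2)"
      unfolding wedge22_def using Bs[of "\<alpha> x1 x2" "\<alpha> x0 x3"] Bs[of "\<alpha> x1 x3" "\<alpha> x0 x2"]
        Bs[of "\<alpha> x2 x3" "\<alpha> x0 x1"] by simp
  qed
  have l1: "lcs br 1 = span {br x y | x y. True}"
    by (simp add: brset_def)
  have l1b: "lcs br 1 = span {br x y | x y. x \<in> lbar \<and> y \<in> lbar}"
    using lbar_br by (simp add: brset_def)
  have brin: "\<And>x y. br x y \<in> lcs br 1" unfolding l1 by (rule span_base) blast
  have cenl: "\<And>z x. z \<in> lcs br 1 \<Longrightarrow> br z x = 0" using dercent unfolding centre_def by auto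
  have cenr: "\<And>z x. z \<in> lcs br 1 \<Longrightarrow> br x z = 0" by (subst bra) (simp add: cenl)
  have F1: "\<And>V Z. V \<in> lcs br 1 \<Longrightarrow> Z \<in> lcs br 1 \<Longrightarrow> \<alpha> V Z = 0"
  proof -
    fix V Z assume V: "V \<in> lcs br 1" and Z: "Z \<in> lcs br 1"
    show "\<alpha> V Z = 0"
    proof (rule span_gen_zero[where f="\<lambda>V. \<alpha> V Z" and g=br and P="\<lambda>a b. True"])
      show "linear (\<lambda>V. \<alpha> V Z)" using lin_comp_B(2)[OF Bb ab] .
      show "V \<in> span {br a b |a b. True}" using V l1 by simp
      fix a b
      show "\<alpha> (br a b) Z = 0" using d2z[of Z a b] cenl[OF Z] a0 by simp
    qed
  qed
  have F2: "\<And>V. V \<in> lcs br 1 \<Longrightarrow> \<alpha> V L = 0"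
  proof -
    fix V assume V: "V \<in> lcs br 1"
    show "\<alpha> V L = 0"
    proof (rule span_gen_zero[where f="\<lambda>V. \<alpha> V L" and g=br and P="\<lambda>a b. a \<in> lbar \<and> b \<in> lbar"])
      show "linear (\<lambda>V. \<alpha> V L)" using lin_comp_B(2)[OF Bb ab] .
      show "V \<in> span {br a b |a b. a \<in> lbar \<and> b \<in> lbar}" using V l1b by simp
      fix a b assume "a \<in> lbar \<and> b \<in> lbar"
      then show "\<alpha> (br a b) L = 0" using d2z[of L a b] hL a0 by simp
    qed
  qed
  define \<beta> where "\<beta> X Y = \<alpha> (br L X) Y" for X Y
  have F3: "\<beta> X Y = \<beta> Y X" for X Y
    using d2z[of L X Y] F2[OF brin[of X Y]] unfolding \<beta>_def by simp
  have F3b: "\<beta> X P = 0" if "P \<in> lbar" for X P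
    using that F3[of X P] hL a0 unfolding \<beta>_def by simp
  have F4: "\<And>X V U. V \<in> lcs br 1 \<Longrightarrow> U \<in> lcs br 1 \<Longrightarrow> \<gamma> (br L X) V U = 0"
  proof -
    fix X V U assume V: "V \<in> lcs br 1" and U: "U \<in> lcs br 1"
    have "d3 br \<gamma> L X V U = \<gamma> (br L X) V U"
      unfolding d3_def using cenl[OF V] cenl[OF U] cenr[OF V] cenr[OF U] g0 by simp
    moreover have "\<alpha> L V = 0" using F2[OF V] by (subst aa) simp
    moreover have "\<alpha> L U = 0" using F2[OF U] by (subst aa) simp
    ultimately show "\<gamma> (br L X) V U = 0" using d3e[of L X V U] F1[OF V U] Bb
      by (simp add: bilinear_lzero bilinear_rzero)
  qed
  have SS: "\<And>X Y W U. U \<in> lcs br 1 \<Longrightarrow> B (\<beta> X Y) (\<alpha> W U) = B (\<beta> X W) (\<alpha> Y U)"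
  proof -
    fix X Y W U assume U: "U \<in> lcs br 1"
    have V: "br L X \<in> lcs br 1" by (rule brin)
    have "d3 br \<gamma> (br L X) Y W U = \<gamma> (br Y W) (br L X) U"
      unfolding d3_def using cenl[OF V] cenl[OF U] cenr[OF U] g0 by simp
    also have "\<dots> = 0" by (subst ga) (simp add: F4[OF brin U])
    finally have "d3 br \<gamma> (br L X) Y W U = 0" .
    then show "B (\<beta> X Y) (\<alpha> W U) = B (\<beta> X W) (\<alpha> Y U)"
      using d3e[of "br L X" Y W U] F1[OF V U] Bb unfolding \<beta>_def
      by (simp add: bilinear_lzero bilinear_rzero)
  qed
  have Ortho: "\<And>X Y W U. U \<in> lcs br 1 \<Longrightarrow> B (\<beta> X Y) (\<alpha> W U) = 0"
  proof -
    fix X Y W U assume U: "U \<in> lcs br 1"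
    have lb: "B (\<beta> X Y) (\<alpha> P V) = 0" if "P \<in> lbar" "V \<in> lcs br 1" for P V
      using SS[OF that(2), of X Y P] F3b[OF that(1), of X] bilinear_lzero[OF Bb] by simp
    show "B (\<beta> X Y) (\<alpha> W U) = 0"
    proof (rule span_gen_zero[where f="\<lambda>U. B (\<beta> X Y) (\<alpha> W U)" and g=br and P="\<lambda>a b. a \<in> lbar \<and> b \<in> lbar"])
      show "linear (\<lambda>U. B (\<beta> X Y) (\<alpha> W U))" using lin_comp_B(1)[OF Bb ab] .
      show "U \<in> span {br a b |a b. a \<in> lbar \<and> b \<in> lbar}" using U l1b by simp
      fix P Q assume PQ: "P \<in> lbar \<and> Q \<in> lbar"
      have "\<alpha> W (br P Q) = - \<alpha> (br P Q) W" by (rule aa)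
      also have "\<alpha> (br P Q) W = \<alpha> (br P W) Q - \<alpha> (br Q W) P"
        using d2z[of P Q W] by (simp add: algebra_simps)
      also have "\<dots> = \<alpha> P (br Q W) - \<alpha> Q (br P W)" using aa[of "br P W" Q] aa[of "br Q W" P] by simp
      finally have e: "\<alpha> W (br P Q) = \<alpha> Q (br P W) - \<alpha> P (br Q W)" by simp
      show "B (\<beta> X Y) (\<alpha> W (br P Q)) = 0"
        unfolding e using lb[of Q "br P W"] lb[of P "br Q W"] PQ brin Bb
        by (simp add: bilinear_rsub)
    qed
  qed
  have l2: "lcs br (Suc 1) = {0}"
  proof -
    have "{br x y | x y. x \<in> UNIV \<and> y \<in> lcs br 1} = {0}"
    proof
      show "{br x y | x y. x \<in> UNIV \<and> y \<in> lcs br 1} \<subseteq> {0}" using cenr by blast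
      show "{0} \<subseteq> {br x y | x y. x \<in> UNIV \<and> y \<in> lcs br 1}"
        using cenr[OF brin[of 0 0], of 0] brin[of 0 0] by (metis (mono_tags, lifting) UNIV_I insert_subset empty_subsetI mem_Collect_eq)
    qed
    then show ?thesis by (simp add: brset_def)
  qed
  have cB: "condB br B \<alpha> 1" using adm l2 unfolding admissible_def by blast
  show "\<forall>X Y. \<alpha> (br L X) Y = 0"
  proof (intro allI)
    fix X Y
    have mem: "\<beta> X Y \<in> alpha_ker br \<alpha> 1"
      unfolding alpha_ker_def
    proof (intro CollectI exI conjI)
      show "\<beta> X Y = (\<Sum>i<(1::nat). \<alpha> ((\<lambda>i. - Y) i) ((\<lambda>i. br L X) i))"
        unfolding \<beta>_def using aa[of "br L X" Y] bilinear_lneg[OF ab, of Y "br L X"] by (simp add: lessThan_Suc)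
      show "\<forall>i<(1::nat). (\<lambda>i. br L X) i \<in> lcs br 1" using brin by simp
      show "(\<Sum>i<(1::nat). br ((\<lambda>i. - Y) i) ((\<lambda>i. br L X) i)) = 0" using cenr brin by simp
    qed
    have "\<forall>v\<in>alpha_ker br \<alpha> 1. B (\<beta> X Y) v = 0"
    proof
      fix v assume "v \<in> alpha_ker br \<alpha> 1"
      then obtain n :: nat and x y where v: "v = (\<Sum>i<n. \<alpha> (x i) (y i))" and y: "\<forall>i<n. y i \<in> lcs br 1"
        unfolding alpha_ker_def by blast
      have lin: "linear (\<lambda>v. B (\<beta> X Y) v)" using Bb by (simp add: bilinear_def)
      show "B (\<beta> X Y) v = 0" unfolding v linear_sum[OF lin] using Ortho y by simp
    qed
    then have "\<beta> X Y = 0" using cB mem unfolding condB_def nondegenerate_subspace_def by blast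
    then show "\<alpha> (br L X) Y = 0" unfolding \<beta>_def .
  qed
qed

end
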